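(* Let $T\subset V$ be an open cone with basepoint $b\in T$, and let $x\in\partial T\setminus[0]_T$. If a sequence $(x_n)$ in $T$ converges to $x$ in the usual topology of $V$, then it converges in the reverse Funk sense to $r_{T,x}$, i.e. $RF_T(\cdot,x_n)-RF_T(b,x_n)\to r_{T,x}$ pointwise on $T$.
   Context: $V$ is a finite-dimensional real vector space. An open cone is a nonempty open convex set $T\subset V$ with $\lambda T\subseteq T$ for all $\lambda>0$ and $0\notin T$; $\partial T$ its boundary. Write $x\le_T y$ iff $y-x\in\overline T$, $[0]_T:=\overline T\cap(-\overline T)$. $M_T(y/x):=\inf\{\lambda>0:y\le_T\lambda x\}$ for $y\in V,x\in T$, $F_T(y,x):=\log M_T(y/x)$, and the (extended) reverse Funk function $RF_T(x,y):=\log M_T(y/x)$ for $x\in T$, $y\in V$. For $p\in\partial T\setminus[0]_T$, $r_{T,p}(x):=RF_T(x,p)-RF_T(b,p)$, $x\in T$. *)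

theory Defs
  imports "HOL-Analysis.Analysis"
begin

definition open_cone :: "'a::euclidean_space set \<Rightarrow> bool" where
  "open_cone T \<longleftrightarrow> T \<noteq> {} \<and> open T \<and> convex T \<and>
     (\<forall>c::real. c > 0 \<longrightarrow> (\<forall>x\<in>T. c *\<^sub>R x \<in> T)) \<and> 0 \<notin> T"

definition cone_le :: "'a::euclidean_space set \<Rightarrow> 'a \<Rightarrow> 'a \<Rightarrow> bool" where
  "cone_le T x y \<longleftrightarrow> y - x \<in> closure T"

definition zero_class :: "'a::euclidean_space set \<Rightarrow> 'a set" where
  "zero_class T = closure T \<inter> (\<lambda>v. - v) ` closure T"

definition M_T :: "'a::euclidean_space set \<Rightarrow> 'a \<Rightarrow> 'a \<Rightarrow> real" where
  "M_T T y x = Inf {c::real. c > 0 \<and> cone_le T y (c *\<^sub>R x)}"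

definition RF_T :: "'a::euclidean_space set \<Rightarrow> 'a \<Rightarrow> 'a \<Rightarrow> real" where
  "RF_T T x y = ln (M_T T y x)"

definition r_T :: "'a::euclidean_space set \<Rightarrow> 'a \<Rightarrow> 'a \<Rightarrow> 'a \<Rightarrow> real" where
  "r_T T b p x = RF_T T x p - RF_T T b p"

end

theory Submission
  imports Defs
begin

lemma cone_add:
  assumes "open_cone T" "u \<in> T" "v \<in> T" shows "u + v \<in> T"
proof -
  have c: "convex T" and s: "\<forall>c::real. c > 0 \<longrightarrow> (\<forall>x\<in>T. c *\<^sub>R x \<in> T)"
    using assms(1) unfolding open_cone_def by auto
  have "(1/2::real) *\<^sub>R u + (1/2::real) *\<^sub>R v \<in> T"
    using c assms(2,3) by (simp add: convex_def)
  then have "(2::real) *\<^sub>R ((1/2::real) *\<^sub>R u + (1/2::real) *\<^sub>R v) \<in> T" using s by auto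
  then show ?thesis by (simp add: scaleR_add_right)
qed

lemma cone_cl_add:
  assumes "open_cone T" "u \<in> closure T" "v \<in> T" shows "u + v \<in> closure T"
proof -
  obtain s where s: "\<And>n. s n \<in> T" "s \<longlonglongrightarrow> u" using assms(2) closure_sequential by metis
  have "\<And>n. s n + v \<in> T" using cone_add[OF assms(1) s(1) assms(3)] .
  moreover have "(\<lambda>n. s n + v) \<longlonglongrightarrow> u + v" using s(2) by (intro tendsto_intros)
  ultimately show ?thesis by (meson closure_sequential)
qed

lemma M_props:
  assumes T: "open_cone T" and y: "y \<in> T"
  obtains e where "e > 0"
    "\<And>z. {c::real. c > 0 \<and> cone_le T z (c *\<^sub>R y)} \<noteq> {}"
    "\<And>z. M_T T z y \<ge> 0"
    "\<And>z w. M_T T (z + w) y \<le> M_T T z y + norm w / e"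
proof -
  have op: "open T" and s: "\<forall>c::real. c > 0 \<longrightarrow> (\<forall>x\<in>T. c *\<^sub>R x \<in> T)"
    using T unfolding open_cone_def by auto
  obtain e where e: "e > 0" "ball y e \<subseteq> T" using op y open_contains_ball by blast
  have L1: "t *\<^sub>R y - w \<in> T" if "t > 0" "norm w < t * e" for t w
  proof -
    have "norm (w /\<^sub>R t) < e" using that by (simp add: field_simps)
    then have "y - w /\<^sub>R t \<in> T" using e(2) by (auto simp: dist_norm)
    then have "t *\<^sub>R (y - w /\<^sub>R t) \<in> T" using s that(1) by auto
    then show ?thesis using that(1) by (simp add: scaleR_diff_right)
  qed
  define S where "S z = {c::real. c > 0 \<and> cone_le T z (c *\<^sub>R y)}" for z
  have ne: "S z \<noteq> {}" for z
  proof -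
    define c where "c = norm z / e + 1"
    have "norm z / e \<ge> 0" using e(1) by simp
    then have "c > 0" unfolding c_def by linarith
    moreover have "norm z < c * e" using e(1) unfolding c_def by (simp add: field_simps)
    ultimately have "c *\<^sub>R y - z \<in> T" using L1 by blast
    then have "c \<in> S z" using \<open>c > 0\<close> closure_subset unfolding S_def cone_le_def by auto
    then show ?thesis by auto
  qed
  have bdd: "bdd_below (S z)" for z unfolding S_def by (rule bdd_belowI[of _ 0]) auto
  have nn: "M_T T z y \<ge> 0" for z
    unfolding M_T_def using ne[of z] by (intro cInf_greatest) (auto simp: S_def)
  have Lip: "M_T T (z + w) y \<le> M_T T z y + norm w / e" for z w
  proof (rule dense_ge)
    fix r assume r: "M_T T z y + norm w / e < r"
    define t where "t = r - M_T T z y"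
    have t: "t > norm w / e" using r unfolding t_def by simp
    have tp: "t > 0" using t e(1) by (smt (verit) divide_nonneg_pos norm_ge_zero)
    have "M_T T (z + w) y - t \<le> c" if "c \<in> S z" for c
    proof -
      have c: "c > 0" "c *\<^sub>R y - z \<in> closure T" using that unfolding S_def cone_le_def by auto
      have "norm w < t * e" using t e(1) by (simp add: field_simps)
      then have "t *\<^sub>R y - w \<in> T" using L1 tp by blast
      from cone_cl_add[OF T c(2) this]
      have "(c + t) *\<^sub>R y - (z + w) \<in> closure T" by (simp add: algebra_simps)
      then have "c + t \<in> S (z + w)" using c tp unfolding S_def cone_le_def by auto
      then have "M_T T (z + w) y \<le> c + t" unfolding M_T_def S_def[symmetric]
        using bdd by (rule cInf_lower)
      then show ?thesis by simp
    qed
    then have "M_T T (z + w) y - t \<le> M_T T z y"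
      unfolding M_T_def[of T z] S_def[symmetric] using ne by (intro cInf_greatest) auto
    then show "M_T T (z + w) y \<le> r" unfolding t_def by simp
  qed
  show ?thesis by (rule that[OF e(1) ne[unfolded S_def] nn Lip])
qed

lemma M_cont:
  assumes T: "open_cone T" and y: "y \<in> T" and lim: "xs \<longlonglongrightarrow> x"
  shows "(\<lambda>n. M_T T (xs n) y) \<longlonglongrightarrow> M_T T x y"
proof -
  obtain e where e: "e > 0" and Lip: "\<And>z w. M_T T (z + w) y \<le> M_T T z y + norm w / e"
    using M_props[OF T y] by metis
  have b: "norm (M_T T (xs n) y - M_T T x y) \<le> norm (xs n - x) / e" for n
  proof -
    have 1: "M_T T (xs n) y \<le> M_T T x y + norm (xs n - x) / e"
      using Lip[of x "xs n - x"] by simp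
    have 2: "M_T T x y \<le> M_T T (xs n) y + norm (x - xs n) / e"
      using Lip[of "xs n" "x - xs n"] by simp
    have "norm (x - xs n) = norm (xs n - x)" by (rule norm_minus_commute)
    then show ?thesis using 1 2 by auto
  qed
  have l0: "(\<lambda>n. xs n - x) \<longlonglongrightarrow> 0" using lim by (simp add: LIM_zero)
  have l1: "(\<lambda>n. norm (xs n - x)) \<longlonglongrightarrow> 0" using tendsto_norm_zero[OF l0] .
  have l2: "(\<lambda>n. norm (xs n - x) / e) \<longlonglongrightarrow> 0" using tendsto_divide_zero[OF l1, of e] .
  have "(\<lambda>n. M_T T (xs n) y - M_T T x y) \<longlonglongrightarrow> 0"
    by (rule Lim_null_comparison[OF always_eventually l2]) (use b in blast)
  then show ?thesis by (rule LIM_zero_cancel)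
qed

lemma M_pos:
  assumes T: "open_cone T" and y: "y \<in> T" and nx: "- x \<notin> closure T"
  shows "M_T T x y > 0"
proof (rule ccontr)
  assume "\<not> M_T T x y > 0"
  obtain e where ne: "{c::real. c > 0 \<and> cone_le T x (c *\<^sub>R y)} \<noteq> {}" and nn: "M_T T x y \<ge> 0"
    using M_props[OF T y] by metis
  have z: "M_T T x y = 0" using nn \<open>\<not> M_T T x y > 0\<close> by simp
  have "\<exists>c. c > 0 \<and> c < 1 / (real n + 1) \<and> c *\<^sub>R y - x \<in> closure T" for n
  proof -
    have "Inf {c::real. c > 0 \<and> cone_le T x (c *\<^sub>R y)} < 1 / (real n + 1)"
      using z unfolding M_T_def by simp
    from cInf_lessD[OF ne this] show ?thesis unfolding cone_le_def by auto
  qed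
  then obtain c where c: "\<And>n. c n > 0" "\<And>n. c n < 1 / (real n + 1)" "\<And>n. c n *\<^sub>R y - x \<in> closure T"
    by metis
  have "c \<longlonglongrightarrow> 0"
  proof (rule Lim_null_comparison[OF always_eventually])
    show "\<forall>n. norm (c n) \<le> 1 / (real n + 1)" using c(1,2) by (simp add: less_imp_le)
    show "(\<lambda>n. 1 / (real n + 1)) \<longlonglongrightarrow> 0" using LIMSEQ_inverse_real_of_nat by (simp add: inverse_eq_divide add.commute)
  qed
  then have "(\<lambda>n. c n *\<^sub>R y - x) \<longlonglongrightarrow> 0 *\<^sub>R y - x" by (intro tendsto_intros)
  then have "- x \<in> closure T" using closed_sequentially[OF closed_closure c(3)] by simp
  then show False using nx by simp
qed

theorem mainTheorem15:
  fixes T :: "'a::euclidean_space set" and b x :: 'a and xs :: "nat \<Rightarrow> 'a"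
  assumes "open_cone T"
    and "b \<in> T"
    and "x \<in> frontier T" and "x \<notin> zero_class T"
    and "\<And>n. xs n \<in> T"
    and "xs \<longlonglongrightarrow> x"
  shows "\<forall>y\<in>T. (\<lambda>n. RF_T T y (xs n) - RF_T T b (xs n)) \<longlonglongrightarrow> r_T T b x y"
proof
  fix y assume y: "y \<in> T"
  have "x \<in> closure T" using assms(3) by (simp add: frontier_def)
  then have nx: "- x \<notin> closure T" using assms(4) unfolding zero_class_def
    by (metis (no_types, lifting) IntI image_eqI minus_minus)
  have "(\<lambda>n. ln (M_T T (xs n) y) - ln (M_T T (xs n) b)) \<longlonglongrightarrow> ln (M_T T x y) - ln (M_T T x b)"
    by (intro tendsto_intros M_cont[OF assms(1) y assms(6)] M_cont[OF assms(1) assms(2) assms(6)]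
        M_pos[OF assms(1) y nx, THEN less_imp_neq, symmetric]
        M_pos[OF assms(1) assms(2) nx, THEN less_imp_neq, symmetric])
  then show "(\<lambda>n. RF_T T y (xs n) - RF_T T b (xs n)) \<longlonglongrightarrow> r_T T b x y"
    unfolding r_T_def RF_T_def .
qed

end
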